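(* Let $(x_t)_{t\in\Omega}$ be a continuous frame for a finite dimensional Hilbert space $H$. Then $(x_t)_{t\in\Omega}$ does phase retrieval if and only if $(x_t)_{t\in\Omega}$ does $C$-stable phase retrieval for some constant $C>0$.
   Context: $H$ is a real or complex Hilbert space. A continuous frame $(x_t)_{t\in\Omega}$ over a measure space $(\Omega,\mu)$ satisfies $A\|x\|^2\le\int_\Omega|\langle x,x_t\rangle|^2d\mu\le B\|x\|^2$ for all $x\in H$ with $B\ge A>0$; its analysis operator is $\Theta(x)=(\langle x,x_t\rangle)_{t\in\Omega}\in L_2(\Omega)$ and $|\Theta x|=(|\langle x,x_t\rangle|)_{t\in\Omega}$. The frame does phase retrieval if whenever $x,y\in H$ satisfy $|\Theta x|=|\Theta y|$ (as elements of $L_2(\Omega)$) there is a scalar $|\lambda|=1$ with $x=\lambda y$. For $C>0$ it does $C$-stable phase retrieval if $\min_{|\lambda|=1}\|x-\lambda y\|\le C\||\Theta x|-|\Theta y|\|$ for all $x,y\in H$. *)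

theory Defs
  imports "HOL-Analysis.Analysis"
begin

definition real_cont_frame ::
  "'t measure \<Rightarrow> ('t \<Rightarrow> 'a::euclidean_space) \<Rightarrow> real \<Rightarrow> real \<Rightarrow> bool" where
  "real_cont_frame M f A B \<longleftrightarrow>
     0 < A \<and> A \<le> B \<and>
     (\<forall>x. (\<lambda>t. inner x (f t)) \<in> borel_measurable M) \<and>
     (\<forall>x. ennreal (A * (norm x)^2) \<le> (\<integral>\<^sup>+ t. ennreal (\<bar>inner x (f t)\<bar>^2) \<partial>M)
        \<and> (\<integral>\<^sup>+ t. ennreal (\<bar>inner x (f t)\<bar>^2) \<partial>M) \<le> ennreal (B * (norm x)^2))"

definition real_phase_retrieval :: "'t measure \<Rightarrow> ('t \<Rightarrow> 'a::euclidean_space) \<Rightarrow> bool" where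
  "real_phase_retrieval M f \<longleftrightarrow>
     (\<forall>x y. (AE t in M. \<bar>inner x (f t)\<bar> = \<bar>inner y (f t)\<bar>)
        \<longrightarrow> (\<exists>c::real. \<bar>c\<bar> = 1 \<and> x = c *\<^sub>R y))"

text \<open>C-stable phase retrieval; both sides of the inequality are squared
 (the right-hand side is the squared L2 norm of |Theta x| - |Theta y|).\<close>
definition real_stable_phase_retrieval ::
  "'t measure \<Rightarrow> ('t \<Rightarrow> 'a::euclidean_space) \<Rightarrow> real \<Rightarrow> bool" where
  "real_stable_phase_retrieval M f C \<longleftrightarrow>
     (\<forall>x y. ennreal ((INF c\<in>{c::real. \<bar>c\<bar> = 1}. norm (x - c *\<^sub>R y))^2)
        \<le> ennreal (C^2) * (\<integral>\<^sup>+ t. ennreal ((\<bar>inner x (f t)\<bar> - \<bar>inner y (f t)\<bar>)^2) \<partial>M))"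

definition cinner :: "complex^'n \<Rightarrow> complex^'n \<Rightarrow> complex" where
  "cinner x y = (\<Sum>i\<in>UNIV. x $ i * cnj (y $ i))"

definition complex_cont_frame ::
  "'t measure \<Rightarrow> ('t \<Rightarrow> complex^'n) \<Rightarrow> real \<Rightarrow> real \<Rightarrow> bool" where
  "complex_cont_frame M f A B \<longleftrightarrow>
     0 < A \<and> A \<le> B \<and>
     (\<forall>x. (\<lambda>t. cinner x (f t)) \<in> borel_measurable M) \<and>
     (\<forall>x. ennreal (A * (norm x)^2) \<le> (\<integral>\<^sup>+ t. ennreal ((cmod (cinner x (f t)))^2) \<partial>M)
        \<and> (\<integral>\<^sup>+ t. ennreal ((cmod (cinner x (f t)))^2) \<partial>M) \<le> ennreal (B * (norm x)^2))"

definition complex_phase_retrieval :: "'t measure \<Rightarrow> ('t \<Rightarrow> complex^'n) \<Rightarrow> bool" where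
  "complex_phase_retrieval M f \<longleftrightarrow>
     (\<forall>x y. (AE t in M. cmod (cinner x (f t)) = cmod (cinner y (f t)))
        \<longrightarrow> (\<exists>c::complex. cmod c = 1 \<and> x = c *s y))"

definition complex_stable_phase_retrieval ::
  "'t measure \<Rightarrow> ('t \<Rightarrow> complex^'n) \<Rightarrow> real \<Rightarrow> bool" where
  "complex_stable_phase_retrieval M f C \<longleftrightarrow>
     (\<forall>x y. ennreal ((INF c\<in>{c::complex. cmod c = 1}. norm (x - c *s y))^2)
        \<le> ennreal (C^2) * (\<integral>\<^sup>+ t. ennreal ((cmod (cinner x (f t)) - cmod (cinner y (f t)))^2) \<partial>M))"

end

theory Submission
  imports Defs
begin


lemma compact_pos_bound:
  fixes K :: "'v::metric_space set" and \<phi> :: "'t \<Rightarrow> 'v \<Rightarrow> real"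
  assumes K: "compact K"
    and meas: "\<And>z. (\<lambda>t. \<phi> t z) \<in> borel_measurable M"
    and cont: "\<And>t. continuous_on K (\<phi> t)"
    and nonneg: "\<And>t z. 0 \<le> \<phi> t z"
    and nz: "\<And>z. z \<in> K \<Longrightarrow> \<not> (AE t in M. \<phi> t z = 0)"
  shows "\<exists>\<kappa>>0. \<forall>z\<in>K. ennreal \<kappa> \<le> (\<integral>\<^sup>+ t. ennreal (\<phi> t z) \<partial>M)"
proof (rule ccontr)
  assume "\<not> ?thesis"
  then have "\<forall>n::nat. \<exists>z\<in>K. (\<integral>\<^sup>+ t. ennreal (\<phi> t z) \<partial>M) < ennreal (1 / Suc n)"
    by (metis not_le of_nat_0_less_iff zero_less_Suc zero_less_divide_1_iff)
  then obtain z where zK: "\<And>n. z n \<in> K"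
    and zI: "\<And>n. (\<integral>\<^sup>+ t. ennreal (\<phi> t (z n)) \<partial>M) < ennreal (1 / Suc n)"
    by metis
  from K zK obtain l r where lK: "l \<in> K" and r: "strict_mono r" and lim: "(z \<circ> r) \<longlonglongrightarrow> l"
    unfolding compact_eq_seq_compact_metric seq_compact_def by metis
  have pt: "\<And>t. (\<lambda>n. ennreal (\<phi> t (z (r n)))) \<longlonglongrightarrow> ennreal (\<phi> t l)"
  proof -
    fix t
    have "(\<lambda>n. \<phi> t ((z \<circ> r) n)) \<longlonglongrightarrow> \<phi> t l"
      using continuous_on_tendsto_compose[OF cont lim lK] zK by auto
    then show "(\<lambda>n. ennreal (\<phi> t (z (r n)))) \<longlonglongrightarrow> ennreal (\<phi> t l)"
      by (intro tendsto_ennrealI) auto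
  qed
  have "(\<integral>\<^sup>+ t. ennreal (\<phi> t l) \<partial>M) = (\<integral>\<^sup>+ t. liminf (\<lambda>n. ennreal (\<phi> t (z (r n)))) \<partial>M)"
    by (simp add: lim_imp_Liminf[OF sequentially_bot pt])
  also have "\<dots> \<le> liminf (\<lambda>n. \<integral>\<^sup>+ t. ennreal (\<phi> t (z (r n))) \<partial>M)"
    by (rule nn_integral_liminf) (use meas in auto)
  also have "\<dots> \<le> liminf (\<lambda>n. ennreal (1 / Suc n))"
  proof (intro Liminf_mono always_eventually allI)
    fix n
    have "r n \<ge> n" using r by (simp add: strict_mono_imp_increasing)
    then have "ennreal (1 / Suc (r n)) \<le> ennreal (1 / Suc n)"
      by (intro ennreal_leI) (simp add: frac_le)
    then show "(\<integral>\<^sup>+ t. ennreal (\<phi> t (z (r n))) \<partial>M) \<le> ennreal (1 / Suc n)"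
      using zI[of "r n"] by (meson less_imp_le order.trans)
  qed
  also have "\<dots> = 0"
  proof -
    have "(\<lambda>n. ennreal (1 / Suc n)) \<longlonglongrightarrow> ennreal 0"
      by (intro tendsto_ennrealI) (rule LIMSEQ_Suc[OF lim_inverse_n'])
    then show ?thesis by (simp add: lim_imp_Liminf[OF sequentially_bot])
  qed
  finally have "(\<integral>\<^sup>+ t. ennreal (\<phi> t l) \<partial>M) = 0" by simp
  then have "AE t in M. ennreal (\<phi> t l) = 0"
    by (subst (asm) nn_integral_0_iff_AE) (use meas in auto)
  then have "AE t in M. \<phi> t l = 0"
    by eventually_elim (use nonneg in \<open>auto simp: antisym\<close>)
  with nz lK show False by blast
qed



lemma abs_sq_diff:
  fixes x y :: real assumes "0 \<le> x" "0 \<le> y"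
  shows "\<bar>x^2 - y^2\<bar> = \<bar>x - y\<bar> * (x + y)"
proof -
  have "x^2 - y^2 = (x - y) * (x + y)" by (simp add: power2_eq_square algebra_simps)
  then show ?thesis using assms by (simp add: abs_mult)
qed

lemma scale_gap:
  fixes a b :: "'a::real_inner"
  assumes s0: "0 \<le> s" and s1: "s \<le> 1"
  shows "\<bar>norm (s *\<^sub>R a + b) - norm (b - s *\<^sub>R a)\<bar> \<le> \<bar>norm (a + b) - norm (b - a)\<bar>"
proof -
  define P where "P = norm (a + b)"
  define Q where "Q = norm (b - a)"
  define Ps where "Ps = norm (s *\<^sub>R a + b)"
  define Qs where "Qs = norm (b - s *\<^sub>R a)"
  have sq: "\<And>u v::'a. norm (u + v)^2 - norm (v - u)^2 = 4 * inner u v"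
    by (simp add: power2_norm_eq_inner inner_add_left inner_add_right inner_diff_left inner_diff_right inner_commute)
  have e1: "P^2 - Q^2 = 4 * inner a b" unfolding P_def Q_def by (rule sq)
  have e2: "Ps^2 - Qs^2 = 4 * s * inner a b" unfolding Ps_def Qs_def using sq[of "s *\<^sub>R a" b] by simp
  have id1: "s *\<^sub>R (a + b) = ((1+s)/2) *\<^sub>R (s *\<^sub>R a + b) + ((1-s)/2) *\<^sub>R (s *\<^sub>R a - b)"
  proof -
    have "((1+s)/2) *\<^sub>R (s *\<^sub>R a + b) + ((1-s)/2) *\<^sub>R (s *\<^sub>R a - b) = (((1+s)/2) * s + ((1-s)/2) * s) *\<^sub>R a + ((1+s)/2 - (1-s)/2) *\<^sub>R b"
      by (simp add: scaleR_add_right scaleR_diff_right scaleR_add_left scaleR_diff_left)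
    also have "\<dots> = s *\<^sub>R a + s *\<^sub>R b" by (simp add: field_simps)
    finally show ?thesis by (simp add: scaleR_add_right)
  qed
  have id2: "s *\<^sub>R (b - a) = ((1+s)/2) *\<^sub>R (b - s *\<^sub>R a) - ((1-s)/2) *\<^sub>R (b + s *\<^sub>R a)"
  proof -
    have "((1+s)/2) *\<^sub>R (b - s *\<^sub>R a) - ((1-s)/2) *\<^sub>R (b + s *\<^sub>R a) = ((1+s)/2 - (1-s)/2) *\<^sub>R b - (((1+s)/2) * s + ((1-s)/2) * s) *\<^sub>R a"
      by (simp add: scaleR_add_right scaleR_diff_right scaleR_add_left scaleR_diff_left)
    also have "\<dots> = s *\<^sub>R b - s *\<^sub>R a" by (simp add: field_simps)
    finally show ?thesis by (simp add: scaleR_diff_right)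
  qed
  have n1: "norm (s *\<^sub>R a - b) = Qs" unfolding Qs_def by (simp add: norm_minus_commute)
  have n2: "norm (b + s *\<^sub>R a) = Ps" unfolding Ps_def by (simp add: add.commute)
  have "s * P \<le> ((1+s)/2) * Ps + ((1-s)/2) * Qs"
  proof -
    have "s * P = norm (s *\<^sub>R (a + b))" unfolding P_def using s0 by simp
    also have "\<dots> \<le> norm (((1+s)/2) *\<^sub>R (s *\<^sub>R a + b)) + norm (((1-s)/2) *\<^sub>R (s *\<^sub>R a - b))"
      unfolding id1 by (rule norm_triangle_ineq)
    also have "\<dots> = ((1+s)/2) * Ps + ((1-s)/2) * Qs" using s0 s1 n1 Ps_def by simp
    finally show ?thesis .
  qed
  moreover have "s * Q \<le> ((1+s)/2) * Qs + ((1-s)/2) * Ps"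
  proof -
    have "s * Q = norm (s *\<^sub>R (b - a))" unfolding Q_def using s0 by simp
    also have "\<dots> \<le> norm (((1+s)/2) *\<^sub>R (b - s *\<^sub>R a)) + norm (((1-s)/2) *\<^sub>R (b + s *\<^sub>R a))"
      unfolding id2 by (rule norm_triangle_ineq4)
    also have "\<dots> = ((1+s)/2) * Qs + ((1-s)/2) * Ps" using s0 s1 n2 Qs_def by simp
    finally show ?thesis .
  qed
  ultimately have N: "s * (P + Q) \<le> Ps + Qs" by (simp add: field_simps)
  have Pn: "P \<ge> 0" "Q \<ge> 0" "Ps \<ge> 0" "Qs \<ge> 0" unfolding P_def Q_def Ps_def Qs_def by auto
  have k1: "\<bar>Ps - Qs\<bar> * (Ps + Qs) = s * (\<bar>P - Q\<bar> * (P + Q))"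
  proof -
    have "\<bar>Ps - Qs\<bar> * (Ps + Qs) = \<bar>Ps^2 - Qs^2\<bar>" using Pn by (simp add: abs_sq_diff)
    also have "\<dots> = s * \<bar>P^2 - Q^2\<bar>" using e1 e2 s0 by (simp add: abs_mult)
    also have "\<bar>P^2 - Q^2\<bar> = \<bar>P - Q\<bar> * (P + Q)" using Pn by (simp add: abs_sq_diff)
    finally show ?thesis by simp
  qed
  show ?thesis
  proof (cases "Ps + Qs = 0")
    case True
    then have "Ps = 0" "Qs = 0" using Pn by auto
    then show ?thesis unfolding Ps_def Qs_def by simp
  next
    case False
    then have pos: "Ps + Qs > 0" using Pn by auto
    have "\<bar>Ps - Qs\<bar> * (Ps + Qs) \<le> \<bar>P - Q\<bar> * (Ps + Qs)"
      unfolding k1 using N mult_left_mono[OF N, of "\<bar>P - Q\<bar>"] by (simp add: algebra_simps)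
    then have "\<bar>Ps - Qs\<bar> \<le> \<bar>P - Q\<bar>" using pos by simp
    then show ?thesis unfolding P_def Q_def Ps_def Qs_def .
  qed
qed



lemma two_abs_sq: "\<And>a b::real. (\<bar>2*a\<bar> - \<bar>2*b\<bar>)^2 / 4 = (\<bar>a\<bar> - \<bar>b\<bar>)^2"
proof -
  fix a b :: real
  have h1: "\<bar>2*a\<bar> - \<bar>2*b\<bar> = 2*(\<bar>a\<bar> - \<bar>b\<bar>)" by (simp add: abs_mult)
  have h2: "\<And>z::real. (2*z)^2/4 = z^2" by (simp add: power2_eq_square)
  show "(\<bar>2*a\<bar> - \<bar>2*b\<bar>)^2 / 4 = (\<bar>a\<bar> - \<bar>b\<bar>)^2" by (simp only: h1 h2)
qed
lemma INF_pm1: "(INF c\<in>{1::real, -1}. norm (x - c *\<^sub>R (y::'a::real_normed_vector))) = min (norm (x - y)) (norm (x + y))"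
  by (simp add: cInf_insert inf_min)

lemma scale_gap2:
  fixes p q :: "'a::real_inner"
  assumes "0 \<le> s" "s \<le> 1" "0 \<le> s'" "s' \<le> 1"
  shows "(norm (s *\<^sub>R p + s' *\<^sub>R q) - norm (s' *\<^sub>R q - s *\<^sub>R p))^2 \<le> (norm (p + q) - norm (q - p))^2"
proof -
  have 1: "\<bar>norm (s' *\<^sub>R q + s *\<^sub>R p) - norm (s *\<^sub>R p - s' *\<^sub>R q)\<bar> \<le> \<bar>norm (q + s *\<^sub>R p) - norm (s *\<^sub>R p - q)\<bar>"
    using scale_gap[OF assms(3,4), of q "s *\<^sub>R p"] .
  have 2: "\<bar>norm (s *\<^sub>R p + q) - norm (q - s *\<^sub>R p)\<bar> \<le> \<bar>norm (p + q) - norm (q - p)\<bar>"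
    using scale_gap[OF assms(1,2), of p q] .
  have "\<bar>norm (s *\<^sub>R p + s' *\<^sub>R q) - norm (s' *\<^sub>R q - s *\<^sub>R p)\<bar> \<le> \<bar>norm (p + q) - norm (q - p)\<bar>"
    using 1 2 by (simp add: add.commute norm_minus_commute)
  then show ?thesis by (simp add: abs_le_square_iff)
qed

lemma stab_core:
  fixes L :: "'t \<Rightarrow> 'v::real_normed_vector \<Rightarrow> 'k::real_inner"
  assumes lin: "\<And>t. linear (L t)"
    and meas: "\<And>x. (\<lambda>t. norm (L t x)) \<in> borel_measurable M"
    and kpos: "\<kappa> > 0"
    and kap: "ennreal \<kappa> \<le> (\<integral>\<^sup>+ t. ennreal ((norm (L t ((1 / norm u) *\<^sub>R u + (1 / norm v) *\<^sub>R v))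
                   - norm (L t ((1 / norm v) *\<^sub>R v - (1 / norm u) *\<^sub>R u)))^2) \<partial>M)"
    and d0: "0 \<le> d" and du: "d \<le> norm u" and dv: "d \<le> norm v"
  shows "ennreal (d^2) \<le> ennreal (4 / \<kappa>) *
           (\<integral>\<^sup>+ t. ennreal ((norm (L t (u + v)) - norm (L t (v - u)))^2 / 4) \<partial>M)"
proof (cases "d = 0")
  case True then show ?thesis by simp
next
  case False
  then have dp: "d > 0" using d0 by simp
  then have nu: "norm u > 0" and nv: "norm v > 0" using du dv by linarith+
  define s where "s = d / norm u"
  define s' where "s' = d / norm v"
  have s01: "0 \<le> s" "s \<le> 1" "0 \<le> s'" "s' \<le> 1" unfolding s_def s'_def using nu nv d0 du dv by auto
  define \<psi> where "\<psi> a b t = (norm (L t (a + b)) - norm (L t (b - a)))^2" for a b t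
  have Lsc: "L t (c *\<^sub>R a) = c *\<^sub>R L t a" for t c a using linear_scale[OF lin] .
  have Ladd: "L t (a + b) = L t a + L t b" for t a b using linear_add[OF lin] .
  have Ldiff: "L t (a - b) = L t a - L t b" for t a b using linear_diff[OF lin] .
  have pt: "d^2 * \<psi> ((1 / norm u) *\<^sub>R u) ((1 / norm v) *\<^sub>R v) t \<le> \<psi> u v t" for t
  proof -
    have "d^2 * \<psi> ((1 / norm u) *\<^sub>R u) ((1 / norm v) *\<^sub>R v) t
        = (norm (d *\<^sub>R (L t ((1 / norm u) *\<^sub>R u + (1 / norm v) *\<^sub>R v)))
           - norm (d *\<^sub>R (L t ((1 / norm v) *\<^sub>R v - (1 / norm u) *\<^sub>R u))))^2"
      unfolding \<psi>_def using d0 by (simp add: power_mult_distrib[symmetric] right_diff_distrib)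
    also have "\<dots> = (norm (s *\<^sub>R L t u + s' *\<^sub>R L t v) - norm (s' *\<^sub>R L t v - s *\<^sub>R L t u))^2"
      unfolding s_def s'_def by (simp add: Ladd Ldiff Lsc scaleR_add_right scaleR_diff_right)
    also have "\<dots> \<le> (norm (L t u + L t v) - norm (L t v - L t u))^2"
      by (rule scale_gap2[OF s01])
    also have "\<dots> = \<psi> u v t" unfolding \<psi>_def by (simp add: Ladd Ldiff)
    finally show ?thesis .
  qed
  have measpsi': "(\<lambda>t. \<psi> a b t) \<in> borel_measurable M" for a b
    unfolding \<psi>_def using meas[of "a + b"] meas[of "b - a"] by measurable
  have measpsi: "(\<lambda>t. ennreal (\<psi> a b t)) \<in> borel_measurable M" for a b
    using measpsi'[of a b] by measurable
  have mp: "(\<lambda>t. ennreal (\<psi> u v t / 4)) \<in> borel_measurable M"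
    using measpsi'[of u v] by measurable
  have "ennreal (d^2 * \<kappa>) = ennreal (d^2) * ennreal \<kappa>" by (rule ennreal_mult') simp
  also have "\<dots> \<le> ennreal (d^2) * (\<integral>\<^sup>+ t. ennreal (\<psi> ((1 / norm u) *\<^sub>R u) ((1 / norm v) *\<^sub>R v) t) \<partial>M)"
    using kap unfolding \<psi>_def by (intro mult_left_mono) auto
  also have "\<dots> = (\<integral>\<^sup>+ t. ennreal (d^2) * ennreal (\<psi> ((1 / norm u) *\<^sub>R u) ((1 / norm v) *\<^sub>R v) t) \<partial>M)"
    by (rule nn_integral_cmult[symmetric]) (rule measpsi)
  also have "\<dots> \<le> (\<integral>\<^sup>+ t. ennreal (\<psi> u v t) \<partial>M)"
  proof (intro nn_integral_mono)
    fix t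
    show "ennreal (d^2) * ennreal (\<psi> ((1 / norm u) *\<^sub>R u) ((1 / norm v) *\<^sub>R v) t) \<le> ennreal (\<psi> u v t)"
      using pt[of t] by (simp add: ennreal_mult'[symmetric] ennreal_leI)
  qed
  also have "\<dots> = (\<integral>\<^sup>+ t. ennreal 4 * ennreal (\<psi> u v t / 4) \<partial>M)"
  proof (intro nn_integral_cong)
    fix t
    have "\<psi> u v t = 4 * (\<psi> u v t / 4)" by simp
    then show "ennreal (\<psi> u v t) = ennreal 4 * ennreal (\<psi> u v t / 4)"
      by (metis ennreal_mult' zero_le_numeral)
  qed
  also have "\<dots> = ennreal 4 * (\<integral>\<^sup>+ t. ennreal (\<psi> u v t / 4) \<partial>M)"
    by (rule nn_integral_cmult[OF mp])
  finally have main: "ennreal (d^2 * \<kappa>) \<le> ennreal 4 * (\<integral>\<^sup>+ t. ennreal (\<psi> u v t / 4) \<partial>M)" .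
  have "ennreal (d^2) = ennreal (1 / \<kappa>) * ennreal (d^2 * \<kappa>)"
    using kpos by (simp add: ennreal_mult[symmetric])
  also have "\<dots> \<le> ennreal (1 / \<kappa>) * (ennreal 4 * (\<integral>\<^sup>+ t. ennreal (\<psi> u v t / 4) \<partial>M))"
    by (rule mult_left_mono[OF main]) simp
  also have "\<dots> = ennreal (4 / \<kappa>) * (\<integral>\<^sup>+ t. ennreal (\<psi> u v t / 4) \<partial>M)"
  proof -
    have "ennreal (1 / \<kappa>) * ennreal 4 = ennreal (4 / \<kappa>)"
      using kpos by (subst ennreal_mult[symmetric]) auto
    then show ?thesis by (simp add: mult.assoc[symmetric])
  qed
  finally show ?thesis unfolding \<psi>_def .
qed



lemma real_case:
  fixes M :: "'t measure" and f :: "'t \<Rightarrow> 'a::euclidean_space"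
  assumes fr: "real_cont_frame M f A B"
  shows "real_phase_retrieval M f \<longleftrightarrow> (\<exists>C>0. real_stable_phase_retrieval M f C)"
proof
  have mi: "\<And>x. (\<lambda>t. inner x (f t)) \<in> borel_measurable M" using fr unfolding real_cont_frame_def by blast
  assume pr: "real_phase_retrieval M f"
  define \<phi> where "\<phi> t z = (\<bar>inner (fst z + snd z) (f t)\<bar> - \<bar>inner (snd z - fst z) (f t)\<bar>)^2" for t z
  define K where "K = sphere (0::'a) 1 \<times> sphere (0::'a) 1"
  have "\<exists>\<kappa>>0. \<forall>z\<in>K. ennreal \<kappa> \<le> (\<integral>\<^sup>+ t. ennreal (\<phi> t z) \<partial>M)"
  proof (rule compact_pos_bound)
    show "compact K" unfolding K_def by (intro compact_Times compact_sphere)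
    show "(\<lambda>t. \<phi> t z) \<in> borel_measurable M" for z
      unfolding \<phi>_def using mi[of "fst z + snd z"] mi[of "snd z - fst z"] by measurable
    show "continuous_on K (\<phi> t)" for t unfolding \<phi>_def by (intro continuous_intros)
    show "0 \<le> \<phi> t z" for t z by (simp add: \<phi>_def)
    fix z assume zK: "z \<in> K"
    show "\<not> (AE t in M. \<phi> t z = 0)"
    proof
      assume "AE t in M. \<phi> t z = 0"
      then have "AE t in M. \<bar>inner (fst z + snd z) (f t)\<bar> = \<bar>inner (snd z - fst z) (f t)\<bar>"
        by eventually_elim (simp add: \<phi>_def)
      with pr obtain c :: real where c: "\<bar>c\<bar> = 1" "fst z + snd z = c *\<^sub>R (snd z - fst z)"
        unfolding real_phase_retrieval_def by blast
      from zK have n: "norm (fst z) = 1" "norm (snd z) = 1" by (auto simp: K_def mem_Times_iff)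
      from c(1) have "c = 1 \<or> c = -1" by auto
      then show False
      proof
        assume "c = 1"
        then have "fst z + fst z = 0" using c(2) by (simp add: algebra_simps)
        then have "fst z = 0" by (simp add: scaleR_2[symmetric])  
        then show False using n by simp
      next
        assume "c = -1"
        then have "snd z + snd z = 0" using c(2) by (simp add: algebra_simps)
        then have "snd z = 0" by (simp add: scaleR_2[symmetric])
        then show False using n by simp
      qed
    qed
  qed
  then obtain \<kappa> where kp: "\<kappa> > 0" and kb: "\<And>z. z \<in> K \<Longrightarrow> ennreal \<kappa> \<le> (\<integral>\<^sup>+ t. ennreal (\<phi> t z) \<partial>M)"
    by blast
  show "\<exists>C>0. real_stable_phase_retrieval M f C"
  proof (intro exI[of _ "2 / sqrt \<kappa>"] conjI)
    show "2 / sqrt \<kappa> > 0" using kp by simp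
    show "real_stable_phase_retrieval M f (2 / sqrt \<kappa>)" unfolding real_stable_phase_retrieval_def
    proof (intro allI)
      fix x y :: 'a
      define d where "d = (INF c\<in>{c::real. \<bar>c\<bar> = 1}. norm (x - c *\<^sub>R y))"
      have bdd: "bdd_below ((\<lambda>c. norm (x - c *\<^sub>R y)) ` {c::real. \<bar>c\<bar> = 1})"
        by (rule bdd_belowI[of _ 0]) auto
      have ne: "{c::real. \<bar>c\<bar> = 1} \<noteq> {}" using abs_one by blast
      have d0: "0 \<le> d" unfolding d_def by (rule cINF_greatest[OF ne]) auto
      have du: "d \<le> norm (x - y)" unfolding d_def using cINF_lower[OF bdd, of 1] by simp
      have dv: "d \<le> norm (x + y)" unfolding d_def using cINF_lower[OF bdd, of "-1"] by simp
      have C2: "(2 / sqrt \<kappa>)^2 = 4 / \<kappa>" using kp by (simp add: power_divide)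
      have lin: "linear (\<lambda>a. inner a (f t))" for t
        by (rule bounded_linear.linear[OF bounded_linear_inner_left])
      have mn: "(\<lambda>t. norm (inner a (f t))) \<in> borel_measurable M" for a
        using mi[of a] by measurable
      have "ennreal (d^2) \<le> ennreal (4 / \<kappa>) *
           (\<integral>\<^sup>+ t. ennreal ((norm (inner ((x - y) + (x + y)) (f t)) - norm (inner ((x + y) - (x - y)) (f t)))^2 / 4) \<partial>M)"
      proof (cases "x - y = 0 \<or> x + y = 0")
        case True
        then have "d = 0" using d0 du dv by auto
        then show ?thesis by simp
      next
        case False
        let ?z = "((1 / norm (x - y)) *\<^sub>R (x - y), (1 / norm (x + y)) *\<^sub>R (x + y))"
        have "?z \<in> K" using False by (simp add: K_def mem_Times_iff)
        from kb[OF this] show ?thesis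
          by (intro stab_core[where L = "\<lambda>t a. inner a (f t)", OF lin mn kp _ d0 du dv])
             (simp add: \<phi>_def)
      qed
      also have "(\<integral>\<^sup>+ t. ennreal ((norm (inner ((x - y) + (x + y)) (f t)) - norm (inner ((x + y) - (x - y)) (f t)))^2 / 4) \<partial>M)
          = (\<integral>\<^sup>+ t. ennreal ((\<bar>inner x (f t)\<bar> - \<bar>inner y (f t)\<bar>)^2) \<partial>M)"
      proof (intro nn_integral_cong)
        fix t
        have "(x - y) + (x + y) = 2 *\<^sub>R x" "(x + y) - (x - y) = 2 *\<^sub>R y" by (simp_all add: algebra_simps scaleR_2)
        then show "ennreal ((norm (inner ((x - y) + (x + y)) (f t)) - norm (inner ((x + y) - (x - y)) (f t)))^2 / 4)
           = ennreal ((\<bar>inner x (f t)\<bar> - \<bar>inner y (f t)\<bar>)^2)"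
          by (simp only: inner_scaleR_left real_norm_def two_abs_sq scaleR_conv_of_real of_real_numeral)
      qed
      finally show "ennreal ((INF c\<in>{c::real. \<bar>c\<bar> = 1}. norm (x - c *\<^sub>R y))^2) \<le> ennreal ((2 / sqrt \<kappa>)^2) *
           (\<integral>\<^sup>+ t. ennreal ((\<bar>inner x (f t)\<bar> - \<bar>inner y (f t)\<bar>)^2) \<partial>M)"
        unfolding d_def C2 .
    qed
  qed
next
  assume "\<exists>C>0. real_stable_phase_retrieval M f C"
  then obtain C where st: "real_stable_phase_retrieval M f C" by blast
  show "real_phase_retrieval M f" unfolding real_phase_retrieval_def
  proof (intro allI impI)
    fix x y :: 'a
    assume ae: "AE t in M. \<bar>inner x (f t)\<bar> = \<bar>inner y (f t)\<bar>"
    have st': "ennreal ((INF c\<in>{c::real. \<bar>c\<bar> = 1}. norm (x - c *\<^sub>R y))^2) \<le> ennreal (C^2) * (\<integral>\<^sup>+ t. ennreal ((\<bar>inner x (f t)\<bar> - \<bar>inner y (f t)\<bar>)^2) \<partial>M)"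
      using st unfolding real_stable_phase_retrieval_def by blast
    have "(\<integral>\<^sup>+ t. ennreal ((\<bar>inner x (f t)\<bar> - \<bar>inner y (f t)\<bar>)^2) \<partial>M) = (\<integral>\<^sup>+ t. 0 \<partial>M)"
      by (rule nn_integral_cong_AE) (use ae in eventually_elim, simp)
    then have "ennreal ((INF c\<in>{c::real. \<bar>c\<bar> = 1}. norm (x - c *\<^sub>R y))^2) \<le> 0"
      using st' by simp
    then have z: "(INF c\<in>{c::real. \<bar>c\<bar> = 1}. norm (x - c *\<^sub>R y)) = 0" by simp
    have "{c::real. \<bar>c\<bar> = 1} = {1, -1}" by auto
    then have "min (norm (x - y)) (norm (x + y)) = 0" using z INF_pm1[of x y] by simp
    then have "norm (x - y) = 0 \<or> norm (x + y) = 0" by (simp add: min_def split: if_splits)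
    then show "\<exists>c::real. \<bar>c\<bar> = 1 \<and> x = c *\<^sub>R y"
    proof
      assume "norm (x - y) = 0" then have "x = 1 *\<^sub>R y" by simp
      then show ?thesis by (intro exI[of _ 1]) simp
    next
      assume "norm (x + y) = 0" then have "x = (-1) *\<^sub>R y" by (simp add: eq_neg_iff_add_eq_0)
      then show ?thesis by (intro exI[of _ "-1"]) simp
    qed
  qed
qed



lemma cinner_add_left: "cinner (x + y) w = cinner x w + cinner y w"
  unfolding cinner_def by (simp add: distrib_right sum.distrib)
lemma cinner_diff_left: "cinner (x - y) w = cinner x w - cinner y w"
  unfolding cinner_def by (simp add: left_diff_distrib sum_subtractf)
lemma cinner_smult_left: "cinner (c *s x) w = c * cinner x w"
  unfolding cinner_def by (simp add: sum_distrib_left mult.assoc)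
lemma vsc: "(c *\<^sub>R (x::complex^'n)) $ i = complex_of_real c * x $ i"
  by (subst vector_scaleR_component) (rule scaleR_conv_of_real)
lemma cinner_scaleR_left: "cinner (c *\<^sub>R x) w = complex_of_real c * cinner x w"
  unfolding cinner_def by (simp add: sum_distrib_left mult.assoc vsc del: vector_scaleR_component)
lemma cinner_scaleR_right: "cinner x (c *\<^sub>R w) = complex_of_real c * cinner x w"
  unfolding cinner_def by (simp add: sum_distrib_left vsc algebra_simps del: vector_scaleR_component)
lemma cinner_smult_right: "cinner x (c *s w) = cnj c * cinner x w"
  unfolding cinner_def by (simp add: sum_distrib_left algebra_simps)
lemma cinner_commute: "cinner y x = cnj (cinner x y)"
  unfolding cinner_def by (simp add: mult.commute)
lemma cinner_self: "cinner x x = complex_of_real ((norm x)^2)"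
proof -
  have "(norm x)^2 = (\<Sum>i\<in>UNIV. (cmod (x $ i))^2)"
    unfolding norm_vec_def L2_set_def by (simp add: sum_nonneg)
  then have "complex_of_real ((norm x)^2) = (\<Sum>i\<in>UNIV. complex_of_real ((cmod (x $ i))^2))" by simp
  also have "\<dots> = (\<Sum>i\<in>UNIV. x $ i * cnj (x $ i))"
    by (intro sum.cong refl) (metis complex_norm_square of_real_power)
  finally show ?thesis unfolding cinner_def by simp
qed
lemma linear_cinner: "linear (\<lambda>x. cinner x w)"
  by (rule linearI) (simp add: cinner_add_left, subst cinner_scaleR_left, simp add: scaleR_conv_of_real)
lemma cont_cinner[continuous_intros]:
  "continuous_on S f \<Longrightarrow> continuous_on S g \<Longrightarrow> continuous_on S (\<lambda>x. cinner (f x) (g x))"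
  unfolding cinner_def by (intro continuous_intros)

lemma alg_contra:
  fixes c r :: complex
  assumes "r + 1 = c * (1 - r)" "1 + r = c * (r - 1)" "c \<noteq> 0"
  shows False
proof -
  have "c * (1 - r) = c * (r - 1)" using assms(1,2) by (simp add: add.commute)
  then have "1 - r = r - 1" using assms(3) by simp
  then have "r = 1" by (simp add: algebra_simps)
  then show False using assms(1) by simp
qed

lemma cinner_add_right: "cinner w (x + y) = cinner w x + cinner w y"
  unfolding cinner_def by (simp add: distrib_left sum.distrib)
lemma cinner_diff_right: "cinner w (x - y) = cinner w x - cinner w y"
  unfolding cinner_def by (simp add: right_diff_distrib sum_subtractf)
lemma two_sq: "((2::real) * A - 2 * B)^2 / 4 = (A - B)^2"
proof -
  have h1: "(2::real) * A - 2 * B = 2 * (A - B)" by simp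
  have h2: "\<And>z::real. (2*z)^2/4 = z^2" by (simp add: power2_eq_square)
  show ?thesis by (simp only: h1 h2)
qed
lemma smult_neg: "(- c) *s (y::complex^'n) = - (c *s y)"
  by (simp add: vec_eq_iff)

lemma complex_case:
  fixes N :: "'s measure" and g :: "'s \<Rightarrow> complex^'n"
  assumes fr: "complex_cont_frame N g A B"
  shows "complex_phase_retrieval N g \<longleftrightarrow> (\<exists>C>0. complex_stable_phase_retrieval N g C)"
proof
  have mi: "\<And>x. (\<lambda>t. cinner x (g t)) \<in> borel_measurable N" using fr unfolding complex_cont_frame_def by blast
  assume pr: "complex_phase_retrieval N g"
  define \<phi> where "\<phi> t z = (cmod (cinner (fst z + snd z) (g t)) - cmod (cinner (snd z - fst z) (g t)))^2" for t z
  define K where "K = (sphere (0::complex^'n) 1 \<times> sphere (0::complex^'n) 1) \<inter> {z. Im (cinner (fst z) (snd z)) = 0}"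
  have "\<exists>\<kappa>>0. \<forall>z\<in>K. ennreal \<kappa> \<le> (\<integral>\<^sup>+ t. ennreal (\<phi> t z) \<partial>N)"
  proof (rule compact_pos_bound)
    have "closed {z::(complex^'n) \<times> (complex^'n). Im (cinner (fst z) (snd z)) = 0}"
      by (intro closed_Collect_eq continuous_intros)
    then show "compact K" unfolding K_def by (intro compact_Int_closed compact_Times compact_sphere)
    show "(\<lambda>t. \<phi> t z) \<in> borel_measurable N" for z
      unfolding \<phi>_def using mi[of "fst z + snd z"] mi[of "snd z - fst z"] by measurable
    show "continuous_on K (\<phi> t)" for t unfolding \<phi>_def by (intro continuous_intros)
    show "0 \<le> \<phi> t z" for t z by (simp add: \<phi>_def)
    fix z assume zK: "z \<in> K"
    show "\<not> (AE t in N. \<phi> t z = 0)"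
    proof
      assume "AE t in N. \<phi> t z = 0"
      then have "AE t in N. cmod (cinner (fst z + snd z) (g t)) = cmod (cinner (snd z - fst z) (g t))"
        by eventually_elim (simp add: \<phi>_def)
      with pr obtain c :: complex where c: "cmod c = 1" "fst z + snd z = c *s (snd z - fst z)"
        unfolding complex_phase_retrieval_def by blast
      from zK have n: "norm (fst z) = 1" "norm (snd z) = 1" and im: "Im (cinner (fst z) (snd z)) = 0"
        by (auto simp: K_def mem_Times_iff)
      define r where "r = cinner (fst z) (snd z)"
      have cr: "cnj r = r" using im unfolding r_def by (simp add: complex_eq_iff)
      have uu: "cinner (fst z) (fst z) = 1" "cinner (snd z) (snd z) = 1" using n by (simp_all add: cinner_self)
      have e1: "r + 1 = c * (1 - r)"
        using arg_cong[OF c(2), of "\<lambda>a. cinner a (snd z)"]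
        by (simp add: cinner_add_left cinner_diff_left cinner_smult_left uu r_def right_diff_distrib)
      have e2: "1 + r = c * (r - 1)"
        using arg_cong[OF c(2), of "\<lambda>a. cinner a (fst z)"] cr
        by (simp add: cinner_add_left cinner_diff_left cinner_smult_left uu cinner_commute[of "snd z" "fst z"] r_def right_diff_distrib)
      have "c \<noteq> 0" using c(1) by auto
      with e1 e2 show False by (rule alg_contra)
    qed
  qed
  then obtain \<kappa> where kp: "\<kappa> > 0" and kb: "\<And>z. z \<in> K \<Longrightarrow> ennreal \<kappa> \<le> (\<integral>\<^sup>+ t. ennreal (\<phi> t z) \<partial>N)"
    by blast
  show "\<exists>C>0. complex_stable_phase_retrieval N g C"
  proof (intro exI[of _ "2 / sqrt \<kappa>"] conjI)
    show "2 / sqrt \<kappa> > 0" using kp by simp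
    show "complex_stable_phase_retrieval N g (2 / sqrt \<kappa>)" unfolding complex_stable_phase_retrieval_def
    proof (intro allI)
      fix x y :: "complex^'n"
      define d where "d = (INF c\<in>{c::complex. cmod c = 1}. norm (x - c *s y))"
      have bdd: "bdd_below ((\<lambda>c. norm (x - c *s y)) ` {c::complex. cmod c = 1})"
        by (rule bdd_belowI[of _ 0]) auto
      have ne: "{c::complex. cmod c = 1} \<noteq> {}" using norm_one by blast
      have d0: "0 \<le> d" unfolding d_def by (rule cINF_greatest[OF ne]) auto
      define w where "w = cinner x y"
      define c0 where "c0 = (if w = 0 then 1 else w / complex_of_real (cmod w))"
      have c0n: "cmod c0 = 1" unfolding c0_def by (simp add: norm_divide)
      have c0r: "Im (cnj c0 * w) = 0"
      proof (cases "w = 0")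
        case True then show ?thesis by simp
      next
        case False
        have "cnj c0 * w = complex_of_real ((cmod w)^2 / cmod w)"
          using False unfolding c0_def by (simp add: complex_norm_square[symmetric] mult.commute)
        then show ?thesis by simp
      qed
      define y' where "y' = c0 *s y"
      have du: "d \<le> norm (x - y')" unfolding d_def y'_def using cINF_lower[OF bdd, of c0] c0n by simp
      have dv: "d \<le> norm (x + y')" unfolding d_def y'_def using cINF_lower[OF bdd, of "-c0"] c0n by (simp add: smult_neg)
      have imuv: "Im (cinner (x - y') (x + y')) = 0"
      proof -
        have xy: "Im (cinner x y') = 0" unfolding y'_def using c0r by (simp add: cinner_smult_right w_def)
        have "cinner (x - y') (x + y') = cinner x x + cinner x y' - cnj (cinner x y') - cinner y' y'"
          by (simp add: cinner_add_right cinner_diff_left cinner_commute[of y' x])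
        then show ?thesis using xy by (simp add: cinner_self)
      qed
      have C2: "(2 / sqrt \<kappa>)^2 = 4 / \<kappa>" using kp by (simp add: power_divide)
      have mn: "(\<lambda>t. norm (cinner a (g t))) \<in> borel_measurable N" for a
        using mi[of a] by measurable
      have "ennreal (d^2) \<le> ennreal (4 / \<kappa>) *
           (\<integral>\<^sup>+ t. ennreal ((norm (cinner ((x - y') + (x + y')) (g t)) - norm (cinner ((x + y') - (x - y')) (g t)))^2 / 4) \<partial>N)"
      proof (cases "x - y' = 0 \<or> x + y' = 0")
        case True
        then have "d = 0" using d0 du dv by auto
        then show ?thesis by simp
      next
        case False
        let ?z = "((1 / norm (x - y')) *\<^sub>R (x - y'), (1 / norm (x + y')) *\<^sub>R (x + y'))"
        have "?z \<in> K" using False imuv by (simp add: K_def mem_Times_iff cinner_scaleR_left cinner_scaleR_right)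
        from kb[OF this] show ?thesis
          by (intro stab_core[where L = "\<lambda>t a. cinner a (g t)", OF linear_cinner mn kp _ d0 du dv])
             (simp add: \<phi>_def)
      qed
      also have "(\<integral>\<^sup>+ t. ennreal ((norm (cinner ((x - y') + (x + y')) (g t)) - norm (cinner ((x + y') - (x - y')) (g t)))^2 / 4) \<partial>N)
          = (\<integral>\<^sup>+ t. ennreal ((cmod (cinner x (g t)) - cmod (cinner y (g t)))^2) \<partial>N)"
      proof (intro nn_integral_cong)
        fix t
        have "(x - y') + (x + y') = 2 *\<^sub>R x" "(x + y') - (x - y') = 2 *\<^sub>R y'" by (simp_all add: algebra_simps scaleR_2)
        moreover have "norm (cinner (2 *\<^sub>R x) (g t)) = 2 * cmod (cinner x (g t))"
          by (simp add: cinner_scaleR_left norm_mult)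
        moreover have "norm (cinner (2 *\<^sub>R y') (g t)) = 2 * cmod (cinner y (g t))"
          using c0n by (simp add: cinner_scaleR_left norm_mult y'_def cinner_smult_left)
        ultimately show "ennreal ((norm (cinner ((x - y') + (x + y')) (g t)) - norm (cinner ((x + y') - (x - y')) (g t)))^2 / 4)
           = ennreal ((cmod (cinner x (g t)) - cmod (cinner y (g t)))^2)"
          by (simp only: two_sq)
      qed
      finally show "ennreal ((INF c\<in>{c::complex. cmod c = 1}. norm (x - c *s y))^2) \<le> ennreal ((2 / sqrt \<kappa>)^2) *
           (\<integral>\<^sup>+ t. ennreal ((cmod (cinner x (g t)) - cmod (cinner y (g t)))^2) \<partial>N)"
        unfolding d_def C2 .
    qed
  qed
next
  assume "\<exists>C>0. complex_stable_phase_retrieval N g C"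
  then obtain C where st: "complex_stable_phase_retrieval N g C" by blast
  show "complex_phase_retrieval N g" unfolding complex_phase_retrieval_def
  proof (intro allI impI)
    fix x y :: "complex^'n"
    assume ae: "AE t in N. cmod (cinner x (g t)) = cmod (cinner y (g t))"
    have st': "ennreal ((INF c\<in>{c::complex. cmod c = 1}. norm (x - c *s y))^2) \<le> ennreal (C^2) * (\<integral>\<^sup>+ t. ennreal ((cmod (cinner x (g t)) - cmod (cinner y (g t)))^2) \<partial>N)"
      using st unfolding complex_stable_phase_retrieval_def by blast
    have "(\<integral>\<^sup>+ t. ennreal ((cmod (cinner x (g t)) - cmod (cinner y (g t)))^2) \<partial>N) = (\<integral>\<^sup>+ t. 0 \<partial>N)"
      by (rule nn_integral_cong_AE) (use ae in eventually_elim, simp)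
    then have "ennreal ((INF c\<in>{c::complex. cmod c = 1}. norm (x - c *s y))^2) \<le> 0"
      using st' by simp
    then have z: "(INF c\<in>{c::complex. cmod c = 1}. norm (x - c *s y)) = 0" by simp
    have sph: "sphere (0::complex) 1 = {c. cmod c = 1}" by auto
    have fe: "(\<lambda>c. norm (x - c *s y)) = (\<lambda>c. norm (\<chi> i. x $ i - c * y $ i))"
      by (auto simp: vec_eq_iff intro!: ext arg_cong[where f=norm])
    have "continuous_on (sphere 0 1) (\<lambda>c. norm (x - c *s y))"
      unfolding fe by (intro continuous_intros)
    then obtain c1 where c1: "c1 \<in> sphere 0 1" "\<And>c. c \<in> sphere 0 1 \<Longrightarrow> norm (x - c1 *s y) \<le> norm (x - c *s y)"
      using continuous_attains_inf[OF compact_sphere, of 0 1 "\<lambda>c. norm (x - c *s y)"] by auto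
    have bdd: "bdd_below ((\<lambda>c. norm (x - c *s y)) ` {c::complex. cmod c = 1})"
      by (rule bdd_belowI[of _ 0]) auto
    have "norm (x - c1 *s y) \<le> (INF c\<in>{c::complex. cmod c = 1}. norm (x - c *s y))"
      using c1 sph by (intro cINF_greatest) auto
    then have "norm (x - c1 *s y) = 0" using z by simp
    then show "\<exists>c::complex. cmod c = 1 \<and> x = c *s y" using c1(1) sph by (intro exI[of _ c1]) auto
  qed
qed


theorem corollary2p3:
  fixes M :: "'t measure" and f :: "'t \<Rightarrow> 'a::euclidean_space" and A B :: real
    and N :: "'s measure" and g :: "'s \<Rightarrow> complex^'n" and A' B' :: real
  shows "(real_cont_frame M f A B \<longrightarrow>
            (real_phase_retrieval M f \<longleftrightarrow> (\<exists>C>0. real_stable_phase_retrieval M f C)))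
       \<and> (complex_cont_frame N g A' B' \<longrightarrow>
            (complex_phase_retrieval N g \<longleftrightarrow> (\<exists>C>0. complex_stable_phase_retrieval N g C)))"
  using real_case[of M f A B] complex_case[of N g A' B'] by blast

end
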